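(* Let $f\colon\{0,1\}^n\to\{0,1\}$ be a total function with $f^{-1}(0)\neq\emptyset$. Then there exist a partial function $g\colon\{0,1\}^{2n}\to\{0,1,*\}$ and an input $z\in g^{-1}( * )$ such that \[ \min\{\mathrm{C}_{\bar 0}(g,z),\,\mathrm{C}_{\bar 1}(g,z)\}\;\ge\;\mathrm{C}_0(f)\qquad\text{and}\qquad\mathrm{C}(g)\;\le\;2\,\mathrm{UC}_1(f). \]
   Context: For a partial function $f\colon\{0,1\}^n\to\{0,1,*\}$: a partial input $\rho\in\{0,1,*\}^n$ is consistent with $x\in\{0,1\}^n$ if $\rho_i=x_i$ whenever $\rho_i\neq*$; its size $|\rho|$ is the number of non-$*$ entries. For $\Sigma\subseteq\{0,1,*\}$, $\rho$ is a $\Sigma$-certificate for $x$ if $\rho$ is consistent with $x$ and $f(x')\in\Sigma$ for all $x'$ consistent with $\rho$. $\mathrm{C}_\Sigma(f,x)$ is the least size of a $\Sigma$-certificate for $x$, and $\mathrm{C}_\Sigma(f)=\max_{x\in f^{-1}(\Sigma)}\mathrm{C}_\Sigma(f,x)$. We write $0,1,\bar0,\bar1$ for $\Sigma=\{0\},\{1\},\{1,*\},\{0,*\}$, and $\mathrm{C}(f)=\max\{\mathrm{C}_0(f),\mathrm{C}_1(f)\}$. For total $f$, $\mathrm{C}_0(f)$ is the least $k$ such that $f$ is a width-$k$ CNF, and $\mathrm{UC}_1(f)$ is the least $k$ such that $f$ can be written as an unambiguous width-$k$ DNF (every input satisfies at most one term; width = maximum number of literals in a term). *)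

theory Defs
  imports Main
begin

datatype out = O0 | O1 | Star

text \<open>Inputs in {0,1}^n are bool lists of length n; partial inputs in {0,1,*}^n
  are bool option lists of length n (None = *). A (partial) function on {0,1}^n is
  a map on bool lists; only its values on lists of length n matter.\<close>

definition consistent :: "bool option list \<Rightarrow> bool list \<Rightarrow> bool" where
  "consistent \<rho> x \<longleftrightarrow> length \<rho> = length x \<and>
     (\<forall>i < length \<rho>. \<rho> ! i \<noteq> None \<longrightarrow> \<rho> ! i = Some (x ! i))"

definition psize :: "bool option list \<Rightarrow> nat" where
  "psize \<rho> = card {i. i < length \<rho> \<and> \<rho> ! i \<noteq> None}"

definition is_cert :: "nat \<Rightarrow> (bool list \<Rightarrow> out) \<Rightarrow> out set \<Rightarrow> bool option list \<Rightarrow> bool list \<Rightarrow> bool" where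
  "is_cert n f \<Sigma> \<rho> x \<longleftrightarrow> length \<rho> = n \<and> consistent \<rho> x \<and>
     (\<forall>x'. length x' = n \<longrightarrow> consistent \<rho> x' \<longrightarrow> f x' \<in> \<Sigma>)"

definition C_at :: "nat \<Rightarrow> (bool list \<Rightarrow> out) \<Rightarrow> out set \<Rightarrow> bool list \<Rightarrow> nat" where
  "C_at n f \<Sigma> x = (LEAST k. \<exists>\<rho>. is_cert n f \<Sigma> \<rho> x \<and> psize \<rho> = k)"

definition C_sig :: "nat \<Rightarrow> (bool list \<Rightarrow> out) \<Rightarrow> out set \<Rightarrow> nat" where
  "C_sig n f \<Sigma> = (let S = {C_at n f \<Sigma> x | x. length x = n \<and> f x \<in> \<Sigma>}
                     in if S = {} then 0 else Max S)"

definition C_full :: "nat \<Rightarrow> (bool list \<Rightarrow> out) \<Rightarrow> nat" where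
  "C_full n f = max (C_sig n f {O0}) (C_sig n f {O1})"

definition to_out :: "(bool list \<Rightarrow> bool) \<Rightarrow> bool list \<Rightarrow> out" where
  "to_out f x = (if f x then O1 else O0)"

definition C0_total :: "nat \<Rightarrow> (bool list \<Rightarrow> bool) \<Rightarrow> nat" where
  "C0_total n f = C_sig n (to_out f) {O0}"

text \<open>Unambiguous DNFs over n variables: a set of terms, each term a partial
  input (its non-* entries are the literals). f is computed by T if f x holds iff
  x satisfies some term; unambiguous if every input satisfies at most one term.\<close>
definition unamb_dnf_width :: "nat \<Rightarrow> (bool list \<Rightarrow> bool) \<Rightarrow> nat \<Rightarrow> bool" where
  "unamb_dnf_width n f k \<longleftrightarrow> (\<exists>T :: bool option list set.
      (\<forall>t\<in>T. length t = n \<and> psize t \<le> k) \<and>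
      (\<forall>x. length x = n \<longrightarrow> (f x \<longleftrightarrow> (\<exists>t\<in>T. consistent t x))) \<and>
      (\<forall>x. length x = n \<longrightarrow> card {t \<in> T. consistent t x} \<le> 1))"

definition UC1 :: "nat \<Rightarrow> (bool list \<Rightarrow> bool) \<Rightarrow> nat" where
  "UC1 n f = (LEAST k. unamb_dnf_width n f k)"

end

theory Submission
  imports Defs
begin

lemma consistent_la: "consistent r x \<longleftrightarrow> list_all2 (\<lambda>a b. a = None \<or> a = Some b) r x"
  by (auto simp: consistent_def list_all2_conv_all_nth)

lemma consistent_append:
  assumes "length r1 = length x1"
  shows "consistent (r1 @ r2) (x1 @ x2) \<longleftrightarrow> consistent r1 x1 \<and> consistent r2 x2"
  unfolding consistent_la using list_all2_append[OF assms] by blast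

lemma psize_append: "psize (a @ b) = psize a + psize b"
proof -
  let ?A = "{i. i < length a \<and> a ! i \<noteq> None}"
  let ?B = "{i. i < length b \<and> b ! i \<noteq> None}"
  have eq: "{i. i < length (a @ b) \<and> (a @ b) ! i \<noteq> None} = ?A \<union> (\<lambda>i. i + length a) ` ?B"
  proof (rule set_eqI, rule iffI)
    fix x assume x: "x \<in> {i. i < length (a @ b) \<and> (a @ b) ! i \<noteq> None}"
    show "x \<in> ?A \<union> (\<lambda>i. i + length a) ` ?B"
    proof (cases "x < length a")
      case True then show ?thesis using x by (simp add: nth_append)
    next
      case False
      then have "x - length a \<in> ?B" using x by (auto simp: nth_append)
      moreover have "x = (x - length a) + length a" using False by simp
      ultimately show ?thesis by blast
    qed
  qed (auto simp: nth_append)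
  have fA: "finite ?A" by simp
  have fB: "finite ((\<lambda>i. i + length a) ` ?B)" by simp
  have d: "?A \<inter> (\<lambda>i. i + length a) ` ?B = {}" by auto
  have "card ((\<lambda>i. i + length a) ` ?B) = card ?B" by (rule card_image) (simp add: inj_on_def)
  then show ?thesis unfolding psize_def eq using card_Un_disjoint[OF fA fB d] by simp
qed

lemma psize_single: "i < n \<Longrightarrow> psize ((replicate n None)[i := Some v]) = 1"
proof -
  assume "i < n"
  then have "{j. j < length ((replicate n (None::bool option))[i := Some v]) \<and> (replicate n None)[i := Some v] ! j \<noteq> None} = {i}"
    by (auto simp: nth_list_update)
  then show ?thesis unfolding psize_def by simp
qed

lemma C_at_ge:
  assumes "\<exists>\<rho>. is_cert n g S \<rho> x" "\<And>\<rho>. is_cert n g S \<rho> x \<Longrightarrow> m \<le> psize \<rho>"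
  shows "m \<le> C_at n g S x"
proof -
  have "\<exists>k \<rho>. is_cert n g S \<rho> x \<and> psize \<rho> = k" using assms(1) by blast
  then have "\<exists>\<rho>. is_cert n g S \<rho> x \<and> psize \<rho> = C_at n g S x"
    unfolding C_at_def by (rule LeastI_ex)
  then obtain \<rho> where "is_cert n g S \<rho> x" "psize \<rho> = C_at n g S x" by blast
  then show ?thesis using assms(2)[of \<rho>] by simp
qed

lemma C_at_le: "is_cert n g S \<rho> x \<Longrightarrow> C_at n g S x \<le> psize \<rho>"
  unfolding C_at_def by (rule Least_le) blast

lemma C_sig_le:
  assumes "\<And>x. length x = n \<Longrightarrow> g x \<in> S \<Longrightarrow> C_at n g S x \<le> m"
  shows "C_sig n g S \<le> m"
proof -
  let ?S = "{C_at n g S x | x. length x = n \<and> g x \<in> S}"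
  have b: "\<forall>y\<in>?S. y \<le> m" using assms by auto
  then have "finite ?S" using finite_nat_set_iff_bounded_le by blast
  then show ?thesis unfolding C_sig_def Let_def using b by (auto simp: Max_le_iff)
qed

lemma merge:
  assumes "length \<rho> = 2*n" "consistent \<rho> (x0@x0)" "length x0 = n"
  shows "\<exists>\<rho>'. length \<rho>' = n \<and> consistent \<rho>' x0 \<and> psize \<rho>' \<le> psize \<rho> \<and>
    (\<forall>x'. length x' = n \<longrightarrow> consistent \<rho>' x' \<longrightarrow> consistent \<rho> (x'@x0) \<and> consistent \<rho> (x'@x'))"
proof -
  define r1 where "r1 = take n \<rho>"
  define r2 where "r2 = drop n \<rho>"
  have rr: "\<rho> = r1 @ r2" by (simp add: r1_def r2_def)
  have l1: "length r1 = n" and l2: "length r2 = n" using assms by (auto simp: r1_def r2_def)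
  have c1: "consistent r1 x0" and c2: "consistent r2 x0"
    using assms(2) consistent_append[of r1 x0 r2 x0] l1 assms(3) rr by auto
  define \<rho>' where "\<rho>' = map (\<lambda>i. if r1 ! i \<noteq> None \<or> r2 ! i \<noteq> None then Some (x0 ! i) else None) [0..<n]"
  have l': "length \<rho>' = n" by (simp add: \<rho>'_def)
  have c': "consistent \<rho>' x0" using assms(3) by (simp add: \<rho>'_def consistent_def)
  have "{i. i < length \<rho>' \<and> \<rho>' ! i \<noteq> None} =
     {i. i < length r1 \<and> r1 ! i \<noteq> None} \<union> {i. i < length r2 \<and> r2 ! i \<noteq> None}"
    using l1 l2 by (auto simp: \<rho>'_def split: if_splits)
  then have "psize \<rho>' \<le> psize r1 + psize r2" unfolding psize_def by (simp add: card_Un_le)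
  then have ps: "psize \<rho>' \<le> psize \<rho>" using rr psize_append by simp
  have main: "consistent \<rho> (x'@x0) \<and> consistent \<rho> (x'@x')" if x: "length x' = n" "consistent \<rho>' x'" for x'
  proof -
    have agree1: "x' ! i = x0 ! i" if "i < n" "r1 ! i \<noteq> None" for i
    proof -
      have e: "\<rho>' ! i = Some (x0 ! i)" using that by (simp add: \<rho>'_def)
      then have "\<rho>' ! i = Some (x' ! i)" using x that l' unfolding consistent_def by (metis option.distinct(1))
      then show ?thesis using e by simp
    qed
    have agree2: "x' ! i = x0 ! i" if "i < n" "r2 ! i \<noteq> None" for i
    proof -
      have e: "\<rho>' ! i = Some (x0 ! i)" using that by (simp add: \<rho>'_def)
      then have "\<rho>' ! i = Some (x' ! i)" using x that l' unfolding consistent_def by (metis option.distinct(1))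
      then show ?thesis using e by simp
    qed
    have "consistent r1 x'" using c1 agree1 l1 x(1) by (auto simp: consistent_def)
    moreover have "consistent r2 x'" using c2 agree2 l2 x(1) by (auto simp: consistent_def)
    ultimately show ?thesis using c2 rr l1 x(1) consistent_append by simp
  qed
  show ?thesis using l' c' ps main by blast
qed

definition G :: "nat \<Rightarrow> bool option list set \<Rightarrow> bool list \<Rightarrow> out" where
  "G n T w = (if \<exists>t\<in>T. consistent t (take n w) \<and> consistent t (drop n w) then O1
     else if \<exists>t\<in>T. consistent t (take n w) then O0 else Star)"

lemma finite_len: "finite {t :: bool option list. length t = n}"
  using finite_lists_length_eq[of "UNIV :: bool option set" n] by simp

lemma unamb_exists: "unamb_dnf_width n f n"
proof -
  define T where "T = {map Some x | x. length x = n \<and> f x}"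
  have cs: "consistent (map Some y) x \<longleftrightarrow> y = x" if "length y = n" "length x = n" for x y :: "bool list"
    using that by (auto simp: consistent_def intro: nth_equalityI)
  have A: "\<forall>t\<in>T. length t = n \<and> psize t \<le> n"
  proof
    fix t assume "t \<in> T"
    then obtain x where t: "t = map Some x" "length x = n" unfolding T_def by blast
    have "{i. i < length t \<and> t ! i \<noteq> None} = {..<n}" using t by auto
    then show "length t = n \<and> psize t \<le> n" using t by (simp add: psize_def)
  qed
  have B: "\<forall>x. length x = n \<longrightarrow> (f x \<longleftrightarrow> (\<exists>t\<in>T. consistent t x))"
    using cs unfolding T_def by auto
  have C: "\<forall>x. length x = n \<longrightarrow> card {t \<in> T. consistent t x} \<le> 1"
  proof (intro allI impI)
    fix x :: "bool list" assume l: "length x = n"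
    have "{t \<in> T. consistent t x} \<subseteq> {map Some x}"
      using cs l unfolding T_def by auto
    then show "card {t \<in> T. consistent t x} \<le> 1"
      using card_mono[of "{map Some x}"] by fastforce
  qed
  show ?thesis unfolding unamb_dnf_width_def using A B C by blast
qed

theorem theorem2p2:
  fixes n :: nat and f :: "bool list \<Rightarrow> bool"
  assumes "\<exists>x. length x = n \<and> \<not> f x"
  shows "\<exists>(g :: bool list \<Rightarrow> out) z. length z = 2 * n \<and> g z = Star \<and>
           min (C_at (2 * n) g {O1, Star} z) (C_at (2 * n) g {O0, Star} z) \<ge> C0_total n f \<and>
           C_full (2 * n) g \<le> 2 * UC1 n f"
proof -
  define k where "k = UC1 n f"
  have "unamb_dnf_width n f k" unfolding k_def UC1_def by (rule LeastI[OF unamb_exists])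
  then obtain T where H: "(\<forall>t\<in>T. length t = n \<and> psize t \<le> k) \<and>
      (\<forall>x. length x = n \<longrightarrow> (f x \<longleftrightarrow> (\<exists>t\<in>T. consistent t x))) \<and>
      (\<forall>x. length x = n \<longrightarrow> card {t \<in> T. consistent t x} \<le> 1)"
    unfolding unamb_dnf_width_def by (elim exE) (rule that)
  have Tw: "\<And>t. t\<in>T \<Longrightarrow> length t = n \<and> psize t \<le> k" using H by blast
  have Tf: "\<And>x. length x = n \<Longrightarrow> (f x \<longleftrightarrow> (\<exists>t\<in>T. consistent t x))" using H by blast
  have Tu: "\<And>x. length x = n \<Longrightarrow> card {t \<in> T. consistent t x} \<le> 1" using H by blast
  have uniq: "t = t'" if "t \<in> T" "t' \<in> T" "consistent t x" "consistent t' x" "length x = n" for t t' x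
  proof -
    have sub: "{t \<in> T. consistent t x} \<subseteq> {t. length t = n}" using Tw by blast
    have fin: "finite {t \<in> T. consistent t x}" by (rule finite_subset[OF sub finite_len])
    have "\<forall>a\<in>{t \<in> T. consistent t x}. \<forall>b\<in>{t \<in> T. consistent t x}. a = b"
      using Tu[OF that(5)] card_le_Suc0_iff_eq[OF fin] by (metis One_nat_def)
    then show ?thesis using that by blast
  qed
  define F where "F = to_out f"
  let ?S = "{C_at n F {O0} x | x. length x = n \<and> F x \<in> {O0}}"
  have Sne: "?S \<noteq> {}" using assms by (auto simp: F_def to_out_def)
  have "?S \<subseteq> (\<lambda>x. C_at n F {O0} x) ` {x. length x = n}" by auto
  moreover have "finite ((\<lambda>x. C_at n F {O0} x) ` {x::bool list. length x = n})"
    using finite_lists_length_eq[of "UNIV :: bool set" n] by simp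
  ultimately have Sfin: "finite ?S" by (rule finite_subset)
  have "C0_total n f = (if ?S = {} then 0 else Max ?S)"
    unfolding C0_total_def C_sig_def Let_def F_def by (rule refl)
  then have "C0_total n f = Max ?S" by (simp only: Sne if_False)
  then have "C0_total n f \<in> ?S" using Max_in[OF Sfin Sne] by simp
  then obtain x0 where x0a: "C0_total n f = C_at n F {O0} x0" "length x0 = n" "F x0 = O0" by blast
  have x0: "length x0 = n" "\<not> f x0" "C0_total n f = C_at n F {O0} x0"
    using x0a by (auto simp: F_def to_out_def split: if_splits)
  have nx0: "\<not> (\<exists>t\<in>T. consistent t x0)" using Tf x0 by blast
  define g where "g = G n T"
  define z where "z = x0 @ x0"
  have lz: "length z = 2*n" using x0 by (simp add: z_def)
  have gz: "g z = Star" using nx0 x0(1) by (simp add: g_def G_def z_def)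
  have zcert: "is_cert (2*n) g S (map Some z) z" if "Star \<in> S" for S
  proof -
    have cz: "consistent (map Some z) z" by (simp add: consistent_def)
    have eq: "x' = z" if "length x' = 2*n" "consistent (map Some z) x'" for x'
      using that lz by (auto simp: consistent_def intro: nth_equalityI)
    show ?thesis unfolding is_cert_def
    proof (intro conjI allI impI)
      fix x' :: "bool list" assume "length x' = 2*n" "consistent (map Some z) x'"
      then have "x' = z" by (rule eq)
      then show "g x' \<in> S" using gz \<open>Star \<in> S\<close> by simp
    qed (use cz lz in auto)
  qed
  have gx'x0: "g (x'@x0) = O0" if "length x' = n" "f x'" for x'
    using that Tf nx0 x0(1) by (auto simp: g_def G_def)
  have gx'x': "g (x'@x') = O1" if "length x' = n" "f x'" for x'
    using that Tf by (auto simp: g_def G_def)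
  have lower: "C_at n F {O0} x0 \<le> C_at (2*n) g S z"
    if SS: "S = {O1, Star} \<or> S = {O0, Star}" for S
  proof (rule C_at_ge)
    show "\<exists>\<rho>. is_cert (2*n) g S \<rho> z" using zcert SS by blast
    fix \<rho> assume c: "is_cert (2*n) g S \<rho> z"
    then obtain \<rho>' where r': "length \<rho>' = n" "consistent \<rho>' x0" "psize \<rho>' \<le> psize \<rho>"
      "\<And>x'. length x' = n \<Longrightarrow> consistent \<rho>' x' \<Longrightarrow> consistent \<rho> (x'@x0) \<and> consistent \<rho> (x'@x')"
      using merge[of \<rho> n x0] x0(1) by (auto simp: is_cert_def z_def)
    have "is_cert n F {O0} \<rho>' x0" unfolding is_cert_def
    proof (intro conjI allI impI)
      fix x' :: "bool list" assume x': "length x' = n" "consistent \<rho>' x'"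
      show "F x' \<in> {O0}"
      proof (rule ccontr)
        assume "F x' \<notin> {O0}"
        then have fx: "f x'" by (auto simp: F_def to_out_def split: if_splits)
        have "g (x'@x0) \<in> S" "g (x'@x') \<in> S"
          using c r'(4)[OF x'] x' x0(1) by (auto simp: is_cert_def)
        then show False using gx'x0[OF x'(1) fx] gx'x'[OF x'(1) fx] SS by auto
      qed
    qed (use r' in auto)
    then show "C_at n F {O0} x0 \<le> psize \<rho>" using C_at_le r'(3) by (meson le_trans)
  qed
  have part1: "min (C_at (2 * n) g {O1, Star} z) (C_at (2 * n) g {O0, Star} z) \<ge> C0_total n f"
    using lower[of "{O1, Star}"] lower[of "{O0, Star}"] x0(3) by simp
  have bound: "C_at (2*n) g {v} w \<le> 2*k" if w: "length w = 2*n" "g w = v" and nS: "v \<noteq> Star" for w v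
  proof -
    define x where "x = take n w"
    define y where "y = drop n w"
    have lx: "length x = n" and ly: "length y = n" using w by (auto simp: x_def y_def)
    have wxy: "w = x @ y" by (simp add: x_def y_def)
    have sp: "\<And>w'. length w' = 2*n \<Longrightarrow> w' = take n w' @ drop n w' \<and> length (take n w') = n \<and> length (drop n w') = n"
      by simp
    show ?thesis
    proof (cases "\<exists>t\<in>T. consistent t x \<and> consistent t y")
      case True
      then obtain t where t: "t \<in> T" "consistent t x" "consistent t y" by blast
      have v: "v = O1" using w True by (simp add: g_def G_def x_def y_def)
      have lt: "length t = n" using Tw t(1) by blast
      have "is_cert (2*n) g {v} (t @ t) w" unfolding is_cert_def
      proof (intro conjI allI impI)
        show "length (t @ t) = 2 * n" using lt by simp
        show "consistent (t @ t) w" using wxy t lt lx consistent_append by simp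
        fix w' :: "bool list" assume w': "length w' = 2*n" "consistent (t@t) w'"
        then have "consistent t (take n w') \<and> consistent t (drop n w')"
          using sp[OF w'(1)] lt consistent_append by metis
        then show "g w' \<in> {v}" using v t(1) by (auto simp: g_def G_def)
      qed
      then have "C_at (2*n) g {v} w \<le> psize (t @ t)" by (rule C_at_le)
      then show ?thesis using psize_append[of t t] Tw[OF t(1)] by simp
    next
      case False
      then have v: "v \<noteq> O1" using w by (auto simp: g_def G_def x_def y_def split: if_splits)
      show ?thesis
      proof (cases "\<exists>t\<in>T. consistent t x")
        case False2: False
        then have "v = Star" using False w by (auto simp: g_def G_def x_def y_def split: if_splits)
        then show ?thesis using nS by simp
      next
        case True
        then obtain t where t: "t \<in> T" "consistent t x" by blast
        have vv: "v = O0" using w True False by (auto simp: g_def G_def x_def y_def split: if_splits)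
        have lt: "length t = n" using Tw t(1) by blast
        have "\<not> consistent t y" using False t by blast
        then obtain i where i: "i < n" "t ! i \<noteq> None" "t ! i \<noteq> Some (y ! i)"
          using lt ly by (auto simp: consistent_def)
        define r where "r = (replicate n None)[i := Some (y ! i)]"
        have lr: "length r = n" by (simp add: r_def)
        have "is_cert (2*n) g {v} (t @ r) w" unfolding is_cert_def
        proof (intro conjI allI impI)
          show "length (t @ r) = 2 * n" using lt lr by simp
          have "consistent r y" using ly i(1) by (auto simp: r_def consistent_def nth_list_update)
          then show "consistent (t @ r) w" using wxy t lt lx consistent_append by simp
          fix w' :: "bool list" assume w': "length w' = 2*n" "consistent (t@r) w'"
          then have c: "consistent t (take n w')" "consistent r (drop n w')"
            using sp[OF w'(1)] lt consistent_append by metis+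
          have ri: "r ! i = Some (y ! i)" using i(1) by (simp add: r_def)
          then have "r ! i = Some (drop n w' ! i)" using c(2) i(1) lr
            unfolding consistent_def by (metis option.distinct(1))
          then have "drop n w' ! i = y ! i" using ri by simp
          then have nc: "\<not> consistent t (drop n w')" using i lt
            by (auto simp: consistent_def)
          have "\<not> (\<exists>t'\<in>T. consistent t' (take n w') \<and> consistent t' (drop n w'))"
            using uniq[OF t(1) _ c(1)] nc w'(1) by fastforce
          then show "g w' \<in> {v}" using vv t(1) c(1) by (auto simp: g_def G_def)
        qed
        then have "C_at (2*n) g {v} w \<le> psize (t @ r)" by (rule C_at_le)
        moreover have "psize (t @ r) = psize t + 1" using psize_append psize_single[OF i(1)] r_def by simp
        moreover have "psize t \<ge> 1"
        proof -
          have "i \<in> {j. j < length t \<and> t ! j \<noteq> None}" using i lt by simp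
          moreover have "finite {j. j < length t \<and> t ! j \<noteq> None}" by simp
          ultimately show ?thesis unfolding psize_def
            by (metis One_nat_def Suc_leI card_gt_0_iff empty_iff)
        qed
        ultimately show ?thesis using Tw[OF t(1)] by simp
      qed
    qed
  qed
  have "C_full (2*n) g \<le> 2*k" unfolding C_full_def
    using C_sig_le[of "2*n" g "{O0}" "2*k"] C_sig_le[of "2*n" g "{O1}" "2*k"] bound by auto
  then show ?thesis using lz gz part1 k_def by blast
qed

end
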